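(* A function $f\in\mathcal{L}(G)$ is positive semi-definite (respectively positive definite) if and only if $\hat{f}_k\ge 0$ (respectively $\hat{f}_k>0$) for all $k\in\{1,\dots,n\}$. The corresponding kernel $K_f(v_i,v_j)=(\mathbf{C}_{e_j}f)(v_i)$ has the decomposition $$K_f(v,w)=\sum_{k=1}^n\hat{f}_k\,u_k(v)\,u_k(w)\quad(v,w\in V).$$ Further: (i) $f\in\mathcal{A}_{\mathbf{L}}$ and $f$ is positive semi-definite if and only if $\hat{f}_k\ge0$ for all $k$ and $\hat{f}_k=\hat{f}_{k'}$ whenever $\lambda_k=\lambda_{k'}$; (ii) $f\in\mathcal{B}_M$ and $f$ is positive semi-definite if and only if $\hat{f}_k\ge 0$ for all $k$ and $\hat{f}_k=0$ for all $k>M$; (iii) $f$ is conditionally positive definite with respect to the subspace $\mathcal{Y}=\mathrm{span}\{u_{k_1},\dots,u_{k_K}\}$ if and only if $\hat{f}_{k_1}>0,\dots,\hat{f}_{k_K}>0$.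
   Context: Let $G$ be a graph with vertex set $V=\{v_1,\dots,v_n\}$ and a symmetric, entrywise non-negative weighted adjacency matrix $\mathbf{A}$, degree matrix $\mathbf{D}=\mathrm{diag}(\sum_k\mathbf{A}_{ik})$ (assumed positive), and normalized Laplacian $\mathbf{L}=\mathbf{I}_n-\mathbf{D}^{-1/2}\mathbf{A}\mathbf{D}^{-1/2}$. Signals $x:V\to\mathbb{R}$ are identified with vectors in $\mathbb{R}^n$ (space $\mathcal{L}(G)$), and $e_1,\dots,e_n$ is the standard basis. Fix an orthonormal eigendecomposition $\mathbf{L}=\mathbf{U}\,\mathrm{diag}(\lambda_1,\dots,\lambda_n)\mathbf{U}^\intercal$, $\lambda_1\le\dots\le\lambda_n$, with columns $u_1,\dots,u_n$ of $\mathbf{U}$. Graph Fourier transform: $\hat{x}=\mathbf{U}^\intercal x$. Convolution operator: $\mathbf{C}_x=\mathbf{U}\,\mathrm{diag}(\hat{x})\,\mathbf{U}^\intercal$. Unit $f_{\mathbb{1}}=\sum_k u_k$; $\mathcal{A}_{\mathbf{L}}=\mathrm{span}\{f_{\mathbb{1}},\mathbf{L}f_{\mathbb{1}},\dots,\mathbf{L}^{n-1}f_{\mathbb{1}}\}$; for $M\le n$, $\mathcal{B}_M=\mathrm{span}\{u_1,\dots,u_M\}$. For $f\in\mathcal{L}(G)$ let $\mathbf{K}_f\in\mathbb{R}^{n\times n}$ have entries $(\mathbf{K}_f)_{ij}=(\mathbf{C}_{e_j}f)(v_i)$. The function $f$ is called positive semi-definite (positive definite) if $\mathbf{K}_f$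 is symmetric and positive semi-definite (symmetric and strictly positive definite), and conditionally positive definite with respect to a subspace $\mathcal{Y}$ if $y^\intercal\mathbf{K}_f y>0$ for all nonzero $y\in\mathcal{Y}$. *)

theory Defs
  imports Complex_Main
begin

text \<open>Conventions: the graph has vertices v_1..v_n, identified with indices 1..n.
 A signal x on V is a function nat => real; only its values at 1..n matter.
 An n x n matrix is a function nat => nat => real, with indices in 1..n.
 U i k is the i-th entry of the eigenvector u_k, i.e. u_k(v_i).\<close>

definition deg :: "nat \<Rightarrow> (nat \<Rightarrow> nat \<Rightarrow> real) \<Rightarrow> nat \<Rightarrow> real" where
  "deg n A i = (\<Sum>k=1..n. A i k)"

definition normLap :: "nat \<Rightarrow> (nat \<Rightarrow> nat \<Rightarrow> real) \<Rightarrow> nat \<Rightarrow> nat \<Rightarrow> real" where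
  "normLap n A i j = (if i = j then 1 else 0) - A i j / (sqrt (deg n A i) * sqrt (deg n A j))"

definition mat_apply :: "nat \<Rightarrow> (nat \<Rightarrow> nat \<Rightarrow> real) \<Rightarrow> (nat \<Rightarrow> real) \<Rightarrow> nat \<Rightarrow> real" where
  "mat_apply n M x i = (\<Sum>j=1..n. M i j * x j)"

definition gft :: "nat \<Rightarrow> (nat \<Rightarrow> nat \<Rightarrow> real) \<Rightarrow> (nat \<Rightarrow> real) \<Rightarrow> nat \<Rightarrow> real" where
  "gft n U x k = (\<Sum>i=1..n. U i k * x i)"

definition conv_op :: "nat \<Rightarrow> (nat \<Rightarrow> nat \<Rightarrow> real) \<Rightarrow> (nat \<Rightarrow> real) \<Rightarrow> nat \<Rightarrow> nat \<Rightarrow> real" where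
  "conv_op n U x i j = (\<Sum>k=1..n. U i k * gft n U x k * U j k)"

definition std_basis :: "nat \<Rightarrow> nat \<Rightarrow> real" where
  "std_basis j i = (if i = j then 1 else 0)"

definition kernel_mat :: "nat \<Rightarrow> (nat \<Rightarrow> nat \<Rightarrow> real) \<Rightarrow> (nat \<Rightarrow> real) \<Rightarrow> nat \<Rightarrow> nat \<Rightarrow> real" where
  "kernel_mat n U f i j = mat_apply n (conv_op n U (std_basis j)) f i"

definition quad_form :: "nat \<Rightarrow> (nat \<Rightarrow> nat \<Rightarrow> real) \<Rightarrow> (nat \<Rightarrow> real) \<Rightarrow> real" where
  "quad_form n M y = (\<Sum>i=1..n. \<Sum>j=1..n. y i * M i j * y j)"

definition sym_mat :: "nat \<Rightarrow> (nat \<Rightarrow> nat \<Rightarrow> real) \<Rightarrow> bool" where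
  "sym_mat n M \<longleftrightarrow> (\<forall>i\<in>{1..n}. \<forall>j\<in>{1..n}. M i j = M j i)"

definition nonzero_vec :: "nat \<Rightarrow> (nat \<Rightarrow> real) \<Rightarrow> bool" where
  "nonzero_vec n y \<longleftrightarrow> (\<exists>i\<in>{1..n}. y i \<noteq> 0)"

definition pos_semidef_fun :: "nat \<Rightarrow> (nat \<Rightarrow> nat \<Rightarrow> real) \<Rightarrow> (nat \<Rightarrow> real) \<Rightarrow> bool" where
  "pos_semidef_fun n U f \<longleftrightarrow> sym_mat n (kernel_mat n U f)
     \<and> (\<forall>y. quad_form n (kernel_mat n U f) y \<ge> 0)"

definition pos_def_fun :: "nat \<Rightarrow> (nat \<Rightarrow> nat \<Rightarrow> real) \<Rightarrow> (nat \<Rightarrow> real) \<Rightarrow> bool" where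
  "pos_def_fun n U f \<longleftrightarrow> sym_mat n (kernel_mat n U f)
     \<and> (\<forall>y. nonzero_vec n y \<longrightarrow> quad_form n (kernel_mat n U f) y > 0)"

definition eig_span :: "nat \<Rightarrow> (nat \<Rightarrow> nat \<Rightarrow> real) \<Rightarrow> nat set \<Rightarrow> (nat \<Rightarrow> real) set" where
  "eig_span n U S = {y. \<exists>c. \<forall>i\<in>{1..n}. y i = (\<Sum>k\<in>S. c k * U i k)}"

definition cond_pos_def_fun :: "nat \<Rightarrow> (nat \<Rightarrow> nat \<Rightarrow> real) \<Rightarrow> (nat \<Rightarrow> real) \<Rightarrow> (nat \<Rightarrow> real) set \<Rightarrow> bool" where
  "cond_pos_def_fun n U f Y \<longleftrightarrow>
     (\<forall>y\<in>Y. nonzero_vec n y \<longrightarrow> quad_form n (kernel_mat n U f) y > 0)"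

definition unit_fun :: "nat \<Rightarrow> (nat \<Rightarrow> nat \<Rightarrow> real) \<Rightarrow> nat \<Rightarrow> real" where
  "unit_fun n U i = (\<Sum>k=1..n. U i k)"

definition krylov_space :: "nat \<Rightarrow> (nat \<Rightarrow> nat \<Rightarrow> real) \<Rightarrow> (nat \<Rightarrow> nat \<Rightarrow> real) \<Rightarrow> (nat \<Rightarrow> real) set" where
  "krylov_space n L U = {y. \<exists>c. \<forall>i\<in>{1..n}.
      y i = (\<Sum>m<n. c m * ((mat_apply n L ^^ m) (unit_fun n U)) i)}"

end

theory Submission imports Defs "Jordan_Normal_Form.Determinant" "HOL-Computational_Algebra.Polynomial" begin
lemma sum_shift1: "(\<Sum>i=1..n. g i) = (\<Sum>i\<in>{0..<n}. g (Suc i)::real)"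
  by (induction n) auto

lemma row_orth:
  fixes U :: "nat \<Rightarrow> nat \<Rightarrow> real"
  assumes U_orth: "\<forall>k\<in>{1..n}. \<forall>l\<in>{1..n}. (\<Sum>i=1..n. U i k * U i l) = (if k = l then 1 else 0)"
    and i: "i \<in> {1..n}" and j: "j \<in> {1..n}"
  shows "(\<Sum>k=1..n. U i k * U j k) = (if i = j then 1 else 0)"
proof -
  define Um where "Um = mat n n (\<lambda>(i,j). U (Suc i) (Suc j))"
  have c: "Um \<in> carrier_mat n n" "transpose_mat Um \<in> carrier_mat n n" unfolding Um_def by auto
  have "transpose_mat Um * Um = 1\<^sub>m n"
  proof (rule eq_matI)
    fix a b assume a: "a < dim_row (1\<^sub>m n)" and b: "b < dim_col (1\<^sub>m n)"
    have an: "a < n" "b < n" using a b by simp_all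
    have "(transpose_mat Um * Um) $$ (a,b) = (\<Sum>i\<in>{0..<n}. U (Suc i) (Suc a) * U (Suc i) (Suc b))"
      using an by (simp add: Um_def scalar_prod_def)
    also have "\<dots> = (\<Sum>i=1..n. U i (Suc a) * U i (Suc b))"
      using sum_shift1[of "\<lambda>i. U i (Suc a) * U i (Suc b)" n] by simp
    also have "\<dots> = (if a = b then 1 else 0)"
      using U_orth[rule_format, of "Suc a" "Suc b"] an by simp
    finally show "(transpose_mat Um * Um) $$ (a,b) = 1\<^sub>m n $$ (a,b)" using an by simp
  qed (simp_all add: Um_def)
  hence e: "Um * transpose_mat Um = 1\<^sub>m n" using mat_mult_left_right_inverse[OF c(2) c(1)] by blast
  define a where "a = i - 1"
  define b where "b = j - 1"
  have ab: "i = Suc a" "j = Suc b" "a < n" "b < n" using i j by (auto simp: a_def b_def)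
  have "(Um * transpose_mat Um) $$ (a,b) = (\<Sum>k\<in>{0..<n}. U i (Suc k) * U j (Suc k))"
    using ab by (simp add: Um_def scalar_prod_def)
  also have "\<dots> = (\<Sum>k=1..n. U i k * U j k)"
    using sum_shift1[of "\<lambda>k. U i k * U j k" n] by simp
  finally show ?thesis using e ab by simp
qed
lemma lagrange_exists:
  fixes X :: "real set"
  assumes "finite X"
  shows "\<exists>p. degree p \<le> card X - 1 \<and> (\<forall>x\<in>X. poly p x = g x)"
  using assms
proof (induction X rule: finite_induct)
  case empty
  then show ?case by (intro exI[of _ 0]) simp
next
  case (insert a X)
  then obtain p where p: "degree p \<le> card X - 1" "\<forall>x\<in>X. poly p x = g x" by blast
  define q where "q = (\<Prod>x\<in>X. [:-x, 1:])"
  define r where "r = p + smult ((g a - poly p a) / (\<Prod>x\<in>X. a - x)) q"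
  have dq: "degree q \<le> card X"
  proof -
    have "degree q \<le> (\<Sum>x\<in>X. degree [:-x, 1:])" unfolding q_def using degree_prod_sum_le[OF insert(1), of "\<lambda>x. [:-x,1:]"] by (simp add: o_def)
    also have "\<dots> = card X" by simp
    finally show ?thesis .
  qed
  have pq: "poly q x = (\<Prod>y\<in>X. x - y)" for x unfolding q_def by (simp add: poly_prod)
  have nz: "(\<Prod>x\<in>X. a - x) \<noteq> 0" using insert by auto
  have "degree r \<le> max (degree p) (degree (smult ((g a - poly p a) / (\<Prod>x\<in>X. a - x)) q))"
    unfolding r_def by (rule degree_add_le_max)
  also have "\<dots> \<le> card X"
  proof -
    have "degree (smult ((g a - poly p a) / (\<Prod>x\<in>X. a - x)) q) \<le> card X"
      using dq degree_smult_le[of _ q] le_trans by blast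
    moreover have "degree p \<le> card X" using p(1) by linarith
    ultimately show ?thesis by simp
  qed
  finally have "degree r \<le> card (insert a X) - 1" using insert by simp
  moreover have "\<forall>x\<in>insert a X. poly r x = g x"
  proof
    fix x assume "x \<in> insert a X"
    then show "poly r x = g x"
    proof
      assume "x = a" then show ?thesis using nz by (simp add: r_def pq)
    next
      assume x: "x \<in> X"
      have "poly q x = 0" unfolding pq using x insert by (simp add: prod_zero_iff)
      then show ?thesis using x p(2) by (simp add: r_def)
    qed
  qed
  ultimately show ?case by blast
qed

lemma poly_lessn:
  fixes p :: "real poly"
  assumes "degree p < n"
  shows "poly p x = (\<Sum>m<n. coeff p m * x ^ m)"
proof -
  have "poly p x = (\<Sum>m\<le>degree p. coeff p m * x ^ m)" by (rule poly_altdef)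
  also have "\<dots> = (\<Sum>m<n. coeff p m * x ^ m)"
    apply (rule sum.mono_neutral_left)
    using assms by (auto simp: coeff_eq_0)
  finally show ?thesis .
qed

lemma sdm: "finite A \<Longrightarrow> (\<Sum>i\<in>A. g i * (if i = j then 1 else 0)) = (if j \<in> A then g j else (0::real))"
proof -
  assume "finite A"
  have "(\<Sum>i\<in>A. g i * (if i = j then 1 else 0)) = (\<Sum>i\<in>A. if i = j then g i else 0)"
    by (intro sum.cong) auto
  then show ?thesis using \<open>finite A\<close> by simp
qed

lemma sdm2: "finite A \<Longrightarrow> (\<Sum>i\<in>A. g i * (if j = i then 1 else 0)) = (if j \<in> A then g j else (0::real))"
  using sdm[of A g j] by (simp add: eq_commute)

lemma gft_comb:
  fixes U :: "nat \<Rightarrow> nat \<Rightarrow> real"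
  assumes orth: "\<forall>k\<in>{1..n}. \<forall>l\<in>{1..n}. (\<Sum>i=1..n. U i k * U i l) = (if k = l then 1 else 0)"
    and S: "S \<subseteq> {1..n}" and y: "\<forall>i\<in>{1..n}. y i = (\<Sum>l\<in>S. d l * U i l)" and k: "k \<in> {1..n}"
  shows "gft n U y k = (if k \<in> S then d k else 0)"
proof -
  have fS: "finite S" using S finite_subset by blast
  have "gft n U y k = (\<Sum>i=1..n. U i k * (\<Sum>l\<in>S. d l * U i l))"
    unfolding gft_def using y by (intro sum.cong) auto
  also have "\<dots> = (\<Sum>l\<in>S. d l * (\<Sum>i=1..n. U i k * U i l))"
    by (simp add: sum_distrib_left mult_ac sum.swap[of _ S])
  also have "\<dots> = (\<Sum>l\<in>S. d l * (if k = l then 1 else 0))"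
    using orth S k by (intro sum.cong) auto
  also have "\<dots> = (if k \<in> S then d k else 0)"
    using fS by (simp add: sdm2)
  finally show ?thesis .
qed

lemma expand:
  fixes U :: "nat \<Rightarrow> nat \<Rightarrow> real"
  assumes row: "\<forall>i\<in>{1..n}. \<forall>j\<in>{1..n}. (\<Sum>k=1..n. U i k * U j k) = (if i = j then 1 else 0)"
    and i: "i \<in> {1..n}"
  shows "y i = (\<Sum>k=1..n. gft n U y k * U i k)"
proof -
  have "(\<Sum>k=1..n. gft n U y k * U i k) = (\<Sum>k=1..n. (\<Sum>j=1..n. U j k * y j) * U i k)"
    by (simp add: gft_def)
  also have "\<dots> = (\<Sum>k=1..n. \<Sum>j=1..n. y j * (U i k * U j k))"
    by (simp add: sum_distrib_left sum_distrib_right mult_ac)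
  also have "\<dots> = (\<Sum>j=1..n. \<Sum>k=1..n. y j * (U i k * U j k))" by (rule sum.swap)
  also have "\<dots> = (\<Sum>j=1..n. y j * (\<Sum>k=1..n. U i k * U j k))"
    by (simp add: sum_distrib_left)
  also have "\<dots> = (\<Sum>j=1..n. y j * (if i = j then 1 else 0))"
    using row i by (intro sum.cong) auto
  also have "\<dots> = y i" using i by (simp add: sdm2)
  finally show ?thesis by simp
qed

lemma kernel_eq:
  fixes U :: "nat \<Rightarrow> nat \<Rightarrow> real"
  assumes j: "j \<in> {1..n}"
  shows "kernel_mat n U f i j = (\<Sum>k=1..n. gft n U f k * U i k * U j k)"
proof -
  have g: "gft n U (std_basis j) k = U j k" for k
    using j by (simp add: gft_def std_basis_def sdm)
  have "kernel_mat n U f i j = (\<Sum>l=1..n. (\<Sum>k=1..n. U i k * U j k * U l k) * f l)"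
    by (simp add: kernel_mat_def mat_apply_def conv_op_def g)
  also have "\<dots> = (\<Sum>l=1..n. \<Sum>k=1..n. U i k * U j k * (U l k * f l))"
    by (simp add: sum_distrib_left sum_distrib_right mult_ac)
  also have "\<dots> = (\<Sum>k=1..n. \<Sum>l=1..n. U i k * U j k * (U l k * f l))" by (rule sum.swap)
  also have "\<dots> = (\<Sum>k=1..n. U i k * U j k * (\<Sum>l=1..n. U l k * f l))"
    by (simp add: sum_distrib_left)
  finally show ?thesis by (simp add: gft_def mult_ac)
qed

lemma quad_eq:
  fixes U :: "nat \<Rightarrow> nat \<Rightarrow> real"
  shows "quad_form n (kernel_mat n U f) y = (\<Sum>k=1..n. gft n U f k * (gft n U y k)\<^sup>2)"
proof -
  have "quad_form n (kernel_mat n U f) y =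
     (\<Sum>i=1..n. \<Sum>j=1..n. y i * (\<Sum>k=1..n. gft n U f k * U i k * U j k) * y j)"
    unfolding quad_form_def by (intro sum.cong refl) (simp add: kernel_eq)
  also have "\<dots> = (\<Sum>i=1..n. \<Sum>j=1..n. \<Sum>k=1..n. gft n U f k * (U i k * y i) * (U j k * y j))"
    by (simp add: sum_distrib_left sum_distrib_right mult_ac)
  also have "\<dots> = (\<Sum>i=1..n. \<Sum>k=1..n. \<Sum>j=1..n. gft n U f k * (U i k * y i) * (U j k * y j))"
    by (rule sum.cong[OF refl], rule sum.swap)
  also have "\<dots> = (\<Sum>k=1..n. \<Sum>i=1..n. \<Sum>j=1..n. gft n U f k * (U i k * y i) * (U j k * y j))"
    by (rule sum.swap)
  also have "\<dots> = (\<Sum>k=1..n. gft n U f k * ((\<Sum>i=1..n. U i k * y i) * (\<Sum>j=1..n. U j k * y j)))"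
    by (simp add: sum_distrib_left sum_distrib_right mult_ac)
  finally show ?thesis by (simp add: gft_def power2_eq_square)
qed

lemma eigvec:
  fixes U :: "nat \<Rightarrow> nat \<Rightarrow> real"
  assumes orth: "\<forall>k\<in>{1..n}. \<forall>l\<in>{1..n}. (\<Sum>i=1..n. U i k * U i l) = (if k = l then 1 else 0)"
    and k: "k \<in> {1..n}"
  shows "\<forall>l\<in>{1..n}. gft n U (\<lambda>i. U i k) l = (if l = k then 1 else 0)"
    and "nonzero_vec n (\<lambda>i. U i k)"
    and "quad_form n (kernel_mat n U f) (\<lambda>i. U i k) = gft n U f k"
proof -
  show g: "\<forall>l\<in>{1..n}. gft n U (\<lambda>i. U i k) l = (if l = k then 1 else 0)"
    using orth k by (simp add: gft_def)
  show "nonzero_vec n (\<lambda>i. U i k)"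
  proof (rule ccontr)
    assume "\<not> nonzero_vec n (\<lambda>i. U i k)"
    hence "\<forall>i\<in>{1..n}. U i k = 0" by (simp add: nonzero_vec_def)
    hence "(\<Sum>i=1..n. U i k * U i k) = 0" by simp
    thus False using orth k by auto
  qed
  have "quad_form n (kernel_mat n U f) (\<lambda>i. U i k) = (\<Sum>l=1..n. gft n U f l * (if l = k then 1 else 0))"
    unfolding quad_eq using g by (intro sum.cong) auto
  also have "\<dots> = gft n U f k" using k by (simp add: sdm)
  finally show "quad_form n (kernel_mat n U f) (\<lambda>i. U i k) = gft n U f k" .
qed

lemma krylov_iter:
  fixes U :: "nat \<Rightarrow> nat \<Rightarrow> real"
  assumes orth: "\<forall>k\<in>{1..n}. \<forall>l\<in>{1..n}. (\<Sum>i=1..n. U i k * U i l) = (if k = l then 1 else 0)"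
    and L_eig: "\<forall>i\<in>{1..n}. \<forall>j\<in>{1..n}. normLap n A i j = (\<Sum>k=1..n. U i k * lam k * U j k)"
  shows "\<forall>i\<in>{1..n}. (mat_apply n (normLap n A) ^^ m) (unit_fun n U) i = (\<Sum>k=1..n. lam k ^ m * U i k)"
proof (induction m)
  case 0
  then show ?case by (simp add: unit_fun_def)
next
  case (Suc m)
  define F where "F = (mat_apply n (normLap n A) ^^ m) (unit_fun n U)"
  have gF: "gft n U F k = lam k ^ m" if "k \<in> {1..n}" for k
    using gft_comb[OF orth order_refl _ that, of F "\<lambda>k. lam k ^ m"] Suc that by (simp add: F_def)
  show ?case
  proof
    fix i assume i: "i \<in> {1..n}"
    have "(mat_apply n (normLap n A) ^^ Suc m) (unit_fun n U) i = (\<Sum>j=1..n. normLap n A i j * F j)"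
      by (simp add: F_def mat_apply_def)
    also have "\<dots> = (\<Sum>j=1..n. (\<Sum>k=1..n. U i k * lam k * U j k) * F j)"
      using L_eig i by (intro sum.cong) auto
    also have "\<dots> = (\<Sum>j=1..n. \<Sum>k=1..n. U i k * lam k * (U j k * F j))"
      by (simp add: sum_distrib_left sum_distrib_right mult_ac)
    also have "\<dots> = (\<Sum>k=1..n. \<Sum>j=1..n. U i k * lam k * (U j k * F j))" by (rule sum.swap)
    also have "\<dots> = (\<Sum>k=1..n. U i k * lam k * gft n U F k)"
      by (simp add: gft_def sum_distrib_left)
    also have "\<dots> = (\<Sum>k=1..n. lam k ^ Suc m * U i k)"
      by (intro sum.cong) (auto simp: gF)
    finally show "(mat_apply n (normLap n A) ^^ Suc m) (unit_fun n U) i = (\<Sum>k=1..n. lam k ^ Suc m * U i k)" .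
  qed
qed


theorem main_aux:
  fixes n :: nat and A U :: "nat \<Rightarrow> nat \<Rightarrow> real" and lam :: "nat \<Rightarrow> real"
  assumes U_orth: "\<forall>k\<in>{1..n}. \<forall>l\<in>{1..n}. (\<Sum>i=1..n. U i k * U i l) = (if k = l then 1 else 0)"
    and row: "\<forall>i\<in>{1..n}. \<forall>j\<in>{1..n}. (\<Sum>k=1..n. U i k * U j k) = (if i = j then 1 else 0)"
    and L_eig: "\<forall>i\<in>{1..n}. \<forall>j\<in>{1..n}. normLap n A i j = (\<Sum>k=1..n. U i k * lam k * U j k)"
  shows
    "(\<forall>f. pos_semidef_fun n U f \<longleftrightarrow> (\<forall>k\<in>{1..n}. gft n U f k \<ge> 0))
     \<and> (\<forall>f. pos_def_fun n U f \<longleftrightarrow> (\<forall>k\<in>{1..n}. gft n U f k > 0))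
     \<and> (\<forall>f. \<forall>i\<in>{1..n}. \<forall>j\<in>{1..n}.
           kernel_mat n U f i j = (\<Sum>k=1..n. gft n U f k * U i k * U j k))
     \<and> (\<forall>f. (f \<in> krylov_space n (normLap n A) U \<and> pos_semidef_fun n U f) \<longleftrightarrow>
           ((\<forall>k\<in>{1..n}. gft n U f k \<ge> 0) \<and>
            (\<forall>k\<in>{1..n}. \<forall>k'\<in>{1..n}. lam k = lam k' \<longrightarrow> gft n U f k = gft n U f k')))
     \<and> (\<forall>M f. M \<le> n \<longrightarrow>
           ((f \<in> eig_span n U {1..M} \<and> pos_semidef_fun n U f) \<longleftrightarrow>
            ((\<forall>k\<in>{1..n}. gft n U f k \<ge> 0) \<and> (\<forall>k\<in>{1..n}. k > M \<longrightarrow> gft n U f k = 0))))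
     \<and> (\<forall>S f. S \<subseteq> {1..n} \<longrightarrow>
           (cond_pos_def_fun n U f (eig_span n U S) \<longleftrightarrow> (\<forall>k\<in>S. gft n U f k > 0)))"
proof -
  have sym: "sym_mat n (kernel_mat n U f)" for f
    unfolding sym_mat_def by (auto simp: kernel_eq mult_ac)
  have P1: "pos_semidef_fun n U f \<longleftrightarrow> (\<forall>k\<in>{1..n}. gft n U f k \<ge> 0)" for f
  proof
    assume "pos_semidef_fun n U f"
    then show "\<forall>k\<in>{1..n}. gft n U f k \<ge> 0"
      unfolding pos_semidef_fun_def using eigvec(3)[OF U_orth] by metis
  next
    assume "\<forall>k\<in>{1..n}. gft n U f k \<ge> 0"
    then show "pos_semidef_fun n U f"
      unfolding pos_semidef_fun_def quad_eq using sym by (auto intro!: sum_nonneg)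
  qed
  have P2: "pos_def_fun n U f \<longleftrightarrow> (\<forall>k\<in>{1..n}. gft n U f k > 0)" for f
  proof
    assume "pos_def_fun n U f"
    then show "\<forall>k\<in>{1..n}. gft n U f k > 0"
      unfolding pos_def_fun_def using eigvec(2,3)[OF U_orth] by metis
  next
    assume pos: "\<forall>k\<in>{1..n}. gft n U f k > 0"
    have "quad_form n (kernel_mat n U f) y > 0" if y: "nonzero_vec n y" for y
    proof -
      obtain k where k: "k \<in> {1..n}" "gft n U y k \<noteq> 0"
      proof (rule ccontr)
        assume "\<not> thesis"
        with that have z: "\<forall>k\<in>{1..n}. gft n U y k = 0" by blast
        have "\<forall>i\<in>{1..n}. y i = 0"
          using expand[OF row, of _ y] z by simp
        then show False using y by (auto simp: nonzero_vec_def)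
      qed
      show ?thesis unfolding quad_eq
        by (rule sum_pos2[OF _ k(1)]) (use pos k in \<open>auto intro!: mult_nonneg_nonneg simp: less_imp_le\<close>)
    qed
    then show "pos_def_fun n U f" unfolding pos_def_fun_def using sym by blast
  qed
  have kry: "f \<in> krylov_space n (normLap n A) U \<longleftrightarrow>
      (\<exists>c. \<forall>k\<in>{1..n}. gft n U f k = (\<Sum>m<n. c m * lam k ^ m))" for f
  proof
    assume "f \<in> krylov_space n (normLap n A) U"
    then obtain c where c: "\<forall>i\<in>{1..n}. f i = (\<Sum>m<n. c m * ((mat_apply n (normLap n A) ^^ m) (unit_fun n U)) i)"
      unfolding krylov_space_def by blast
    have fexp: "\<forall>i\<in>{1..n}. f i = (\<Sum>k\<in>{1..n}. (\<Sum>m<n. c m * lam k ^ m) * U i k)"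
    proof
      fix i assume i: "i \<in> {1..n}"
      have "f i = (\<Sum>m<n. c m * (\<Sum>k=1..n. lam k ^ m * U i k))"
        using c i krylov_iter[OF U_orth L_eig] by simp
      also have "\<dots> = (\<Sum>m<n. \<Sum>k=1..n. c m * lam k ^ m * U i k)"
        by (simp add: sum_distrib_left mult_ac)
      also have "\<dots> = (\<Sum>k=1..n. \<Sum>m<n. c m * lam k ^ m * U i k)" by (rule sum.swap)
      also have "\<dots> = (\<Sum>k\<in>{1..n}. (\<Sum>m<n. c m * lam k ^ m) * U i k)"
        by (simp add: sum_distrib_right)
      finally show "f i = (\<Sum>k\<in>{1..n}. (\<Sum>m<n. c m * lam k ^ m) * U i k)" .
    qed
    then show "\<exists>c. \<forall>k\<in>{1..n}. gft n U f k = (\<Sum>m<n. c m * lam k ^ m)"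
      using gft_comb[OF U_orth order_refl fexp] by (intro exI[of _ c]) auto
  next
    assume "\<exists>c. \<forall>k\<in>{1..n}. gft n U f k = (\<Sum>m<n. c m * lam k ^ m)"
    then obtain c where c: "\<forall>k\<in>{1..n}. gft n U f k = (\<Sum>m<n. c m * lam k ^ m)" by blast
    have "\<forall>i\<in>{1..n}. f i = (\<Sum>m<n. c m * ((mat_apply n (normLap n A) ^^ m) (unit_fun n U)) i)"
    proof
      fix i assume i: "i \<in> {1..n}"
      have "f i = (\<Sum>k=1..n. gft n U f k * U i k)" using expand[OF row i] .
      also have "\<dots> = (\<Sum>k=1..n. (\<Sum>m<n. c m * lam k ^ m) * U i k)"
        using c by (intro sum.cong) auto
      also have "\<dots> = (\<Sum>k=1..n. \<Sum>m<n. c m * lam k ^ m * U i k)"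
        by (simp add: sum_distrib_right)
      also have "\<dots> = (\<Sum>m<n. \<Sum>k=1..n. c m * lam k ^ m * U i k)" by (rule sum.swap)
      also have "\<dots> = (\<Sum>m<n. c m * (\<Sum>k=1..n. lam k ^ m * U i k))"
        by (simp add: sum_distrib_left mult_ac)
      also have "\<dots> = (\<Sum>m<n. c m * ((mat_apply n (normLap n A) ^^ m) (unit_fun n U)) i)"
        using i krylov_iter[OF U_orth L_eig] by simp
      finally show "f i = (\<Sum>m<n. c m * ((mat_apply n (normLap n A) ^^ m) (unit_fun n U)) i)" .
    qed
    then show "f \<in> krylov_space n (normLap n A) U" unfolding krylov_space_def by blast
  qed
  have P4: "(f \<in> krylov_space n (normLap n A) U \<and> pos_semidef_fun n U f) \<longleftrightarrow>
           ((\<forall>k\<in>{1..n}. gft n U f k \<ge> 0) \<and>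
            (\<forall>k\<in>{1..n}. \<forall>k'\<in>{1..n}. lam k = lam k' \<longrightarrow> gft n U f k = gft n U f k'))" for f
  proof
    assume "f \<in> krylov_space n (normLap n A) U \<and> pos_semidef_fun n U f"
    then show "(\<forall>k\<in>{1..n}. gft n U f k \<ge> 0) \<and>
            (\<forall>k\<in>{1..n}. \<forall>k'\<in>{1..n}. lam k = lam k' \<longrightarrow> gft n U f k = gft n U f k')"
      using kry P1 by auto
  next
    assume a: "(\<forall>k\<in>{1..n}. gft n U f k \<ge> 0) \<and>
            (\<forall>k\<in>{1..n}. \<forall>k'\<in>{1..n}. lam k = lam k' \<longrightarrow> gft n U f k = gft n U f k')"
    have "\<exists>c. \<forall>k\<in>{1..n}. gft n U f k = (\<Sum>m<n. c m * lam k ^ m)"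
    proof (cases "n = 0")
      case True then show ?thesis by simp
    next
      case False
      define g where "g \<mu> = gft n U f (SOME k. k \<in> {1..n} \<and> lam k = \<mu>)" for \<mu>
      obtain p where p: "degree p \<le> card (lam ` {1..n}) - 1" "\<forall>x\<in>lam ` {1..n}. poly p x = g x"
        using lagrange_exists[of "lam ` {1..n}" g] by blast
      have "card (lam ` {1..n}) \<le> n" using card_image_le[of "{1..n}" lam] by simp
      hence dp: "degree p < n" using p(1) False by linarith
      have "gft n U f k = (\<Sum>m<n. coeff p m * lam k ^ m)" if k: "k \<in> {1..n}" for k
      proof -
        have ex: "\<exists>k'. k' \<in> {1..n} \<and> lam k' = lam k" using k by blast
        have "g (lam k) = gft n U f k"
          unfolding g_def using someI_ex[OF ex] a k by metis
        then show ?thesis using p(2) k poly_lessn[OF dp] by simp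
      qed
      then show ?thesis by blast
    qed
    then show "f \<in> krylov_space n (normLap n A) U \<and> pos_semidef_fun n U f"
      using kry P1 a by blast
  qed
  have P5: "(f \<in> eig_span n U {1..M} \<and> pos_semidef_fun n U f) \<longleftrightarrow>
            ((\<forall>k\<in>{1..n}. gft n U f k \<ge> 0) \<and> (\<forall>k\<in>{1..n}. k > M \<longrightarrow> gft n U f k = 0))"
    if M: "M \<le> n" for M f
  proof -
    have sub: "{1..M} \<subseteq> {1..n}" using M by auto
    have "f \<in> eig_span n U {1..M} \<longleftrightarrow> (\<forall>k\<in>{1..n}. k > M \<longrightarrow> gft n U f k = 0)"
    proof
      assume "f \<in> eig_span n U {1..M}"
      then obtain c where c: "\<forall>i\<in>{1..n}. f i = (\<Sum>k\<in>{1..M}. c k * U i k)"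
        unfolding eig_span_def by blast
      show "\<forall>k\<in>{1..n}. k > M \<longrightarrow> gft n U f k = 0"
        using gft_comb[OF U_orth sub c] by auto
    next
      assume z: "\<forall>k\<in>{1..n}. k > M \<longrightarrow> gft n U f k = 0"
      have "\<forall>i\<in>{1..n}. f i = (\<Sum>k\<in>{1..M}. gft n U f k * U i k)"
      proof
        fix i assume i: "i \<in> {1..n}"
        have "f i = (\<Sum>k=1..n. gft n U f k * U i k)" using expand[OF row i] .
        also have "\<dots> = (\<Sum>k\<in>{1..M}. gft n U f k * U i k)"
          by (rule sum.mono_neutral_right) (use sub z in auto)
        finally show "f i = (\<Sum>k\<in>{1..M}. gft n U f k * U i k)" .
      qed
      then show "f \<in> eig_span n U {1..M}" unfolding eig_span_def by blast
    qed
    then show ?thesis using P1 by blast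
  qed
  have P6: "cond_pos_def_fun n U f (eig_span n U S) \<longleftrightarrow> (\<forall>k\<in>S. gft n U f k > 0)"
    if S: "S \<subseteq> {1..n}" for S f
  proof
    assume cp: "cond_pos_def_fun n U f (eig_span n U S)"
    show "\<forall>k\<in>S. gft n U f k > 0"
    proof
      fix k assume kS: "k \<in> S"
      have k: "k \<in> {1..n}" using kS S by auto
      have fS: "finite S" using S finite_subset by blast
      have "(\<lambda>i. U i k) \<in> eig_span n U S"
        unfolding eig_span_def
        by (rule CollectI, rule exI[of _ "\<lambda>l. if l = k then 1 else 0"]) (simp add: fS kS mult.commute[of "if _ then _ else _"] sdm)
      then show "gft n U f k > 0"
        using cp eigvec(2,3)[OF U_orth k] unfolding cond_pos_def_fun_def by metis
    qed
  next
    assume pos: "\<forall>k\<in>S. gft n U f k > 0"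
    show "cond_pos_def_fun n U f (eig_span n U S)" unfolding cond_pos_def_fun_def
    proof (intro ballI impI)
      fix y assume "y \<in> eig_span n U S" and y: "nonzero_vec n y"
      then obtain c where c: "\<forall>i\<in>{1..n}. y i = (\<Sum>k\<in>S. c k * U i k)"
        unfolding eig_span_def by blast
      have g: "\<forall>l\<in>{1..n}. gft n U y l = (if l \<in> S then c l else 0)"
        using gft_comb[OF U_orth S c] by blast
      obtain k where k: "k \<in> S" "c k \<noteq> 0"
      proof (rule ccontr)
        assume "\<not> thesis"
        with that have z: "\<forall>k\<in>S. c k = 0" by blast
        have "\<forall>i\<in>{1..n}. y i = 0" using c z by simp
        then show False using y by (auto simp: nonzero_vec_def)
      qed
      have k1: "k \<in> {1..n}" using k S by auto
      show "quad_form n (kernel_mat n U f) y > 0" unfolding quad_eq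
        by (rule sum_pos2[OF _ k1]) (use pos k g k1 in auto)
    qed
  qed
  show ?thesis
    apply (intro conjI allI ballI impI)
         apply (rule P1)
        apply (rule P2)
       apply (rule kernel_eq, assumption)
      apply (rule P4)
     apply (erule P5)
    apply (erule P6)
    done
qed


theorem theorem1:
  fixes n :: nat and A U :: "nat \<Rightarrow> nat \<Rightarrow> real" and lam :: "nat \<Rightarrow> real"
  assumes A_sym: "\<forall>i\<in>{1..n}. \<forall>j\<in>{1..n}. A i j = A j i"
    and A_nonneg: "\<forall>i\<in>{1..n}. \<forall>j\<in>{1..n}. A i j \<ge> 0"
    and deg_pos: "\<forall>i\<in>{1..n}. deg n A i > 0"
    and U_orth: "\<forall>k\<in>{1..n}. \<forall>l\<in>{1..n}. (\<Sum>i=1..n. U i k * U i l) = (if k = l then 1 else 0)"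
    and L_eig: "\<forall>i\<in>{1..n}. \<forall>j\<in>{1..n}. normLap n A i j = (\<Sum>k=1..n. U i k * lam k * U j k)"
    and lam_sorted: "\<forall>k\<in>{1..n}. \<forall>k'\<in>{1..n}. k \<le> k' \<longrightarrow> lam k \<le> lam k'"
  shows
    "(\<forall>f. pos_semidef_fun n U f \<longleftrightarrow> (\<forall>k\<in>{1..n}. gft n U f k \<ge> 0))
     \<and> (\<forall>f. pos_def_fun n U f \<longleftrightarrow> (\<forall>k\<in>{1..n}. gft n U f k > 0))
     \<and> (\<forall>f. \<forall>i\<in>{1..n}. \<forall>j\<in>{1..n}.
           kernel_mat n U f i j = (\<Sum>k=1..n. gft n U f k * U i k * U j k))
     \<and> (\<forall>f. (f \<in> krylov_space n (normLap n A) U \<and> pos_semidef_fun n U f) \<longleftrightarrow>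
           ((\<forall>k\<in>{1..n}. gft n U f k \<ge> 0) \<and>
            (\<forall>k\<in>{1..n}. \<forall>k'\<in>{1..n}. lam k = lam k' \<longrightarrow> gft n U f k = gft n U f k')))
     \<and> (\<forall>M f. M \<le> n \<longrightarrow>
           ((f \<in> eig_span n U {1..M} \<and> pos_semidef_fun n U f) \<longleftrightarrow>
            ((\<forall>k\<in>{1..n}. gft n U f k \<ge> 0) \<and> (\<forall>k\<in>{1..n}. k > M \<longrightarrow> gft n U f k = 0))))
     \<and> (\<forall>S f. S \<subseteq> {1..n} \<longrightarrow>
           (cond_pos_def_fun n U f (eig_span n U S) \<longleftrightarrow> (\<forall>k\<in>S. gft n U f k > 0)))"
proof -
  have row: "\<forall>i\<in>{1..n}. \<forall>j\<in>{1..n}. (\<Sum>k=1..n. U i k * U j k) = (if i = j then 1 else 0)"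
    using row_orth[OF U_orth] by blast
  show ?thesis by (rule main_aux[OF U_orth row L_eig])
qed

end
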